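(* Let $P$ be an $n\times n$ sign pattern and $A\in\mathcal{Q}(P)$. If $A$ has the nSSP, then there is $\epsilon>0$ such that for every $M\in M_n(\mathbb{R})$ with $\|M-A\|<\epsilon$ there exists $A'\in\mathcal{Q}(P)$ such that $A'$ is similar to $M$ and $A'$ has the nSSP.
   Context: $M_n(\mathbb{R})$ is the set of real $n\times n$ matrices and $\|\cdot\|$ the Frobenius norm. A sign pattern is an array with entries in $\{+,-,0\}$; its qualitative class $\mathcal{Q}(P)$ is the set of real matrices of the same size whose entries have the signs prescribed by $P$. $\circ$ is the entrywise product. A matrix $A\in M_n(\mathbb{R})$ has the non-symmetric strong spectral property (nSSP) if $X=O$ is the only matrix $X\in M_n(\mathbb{R})$ with $A\circ X=O$ and $AX^\top-X^\top A=O$. *)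

theory Defs
  imports "HOL-Analysis.Analysis"
begin

datatype sgn_entry = Pos | Neg | Zero

type_synonym 'n sign_pattern = "'n \<Rightarrow> 'n \<Rightarrow> sgn_entry"

definition has_sign :: "real \<Rightarrow> sgn_entry \<Rightarrow> bool" where
  "has_sign x s = (case s of Pos \<Rightarrow> x > 0 | Neg \<Rightarrow> x < 0 | Zero \<Rightarrow> x = 0)"

definition qual_class :: "'n::finite sign_pattern \<Rightarrow> (real^'n^'n) set" where
  "qual_class P = {A. \<forall>i j. has_sign (A $ i $ j) (P i j)}"

definition hadamard :: "real^'n^'m \<Rightarrow> real^'n^'m \<Rightarrow> real^'n^'m" where
  "hadamard A B = (\<chi> i j. A $ i $ j * B $ i $ j)"

definition nSSP :: "real^'n^'n \<Rightarrow> bool" where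
  "nSSP A \<longleftrightarrow> (\<forall>X :: real^'n^'n.
      hadamard A X = 0 \<and> A ** transpose X - transpose X ** A = 0 \<longrightarrow> X = 0)"

definition similar_matrix :: "real^'n^'n \<Rightarrow> real^'n^'n \<Rightarrow> bool" where
  "similar_matrix A B \<longleftrightarrow> (\<exists>S :: real^'n^'n. invertible S \<and> A = matrix_inv S ** B ** S)"

end

theory Submission
  imports Defs "HOL-Analysis.Analysis"
begin



lemma mm_scaleR_left: "((c::real) *\<^sub>R (A::real^'n::finite^'m)) ** (B::real^'p^'n) = c *\<^sub>R (A ** B)"
  by (simp add: vec_eq_iff matrix_matrix_mult_def sum_distrib_left mult.assoc)
lemma mm_scaleR_right: "(A::real^'n::finite^'m) ** ((c::real) *\<^sub>R (B::real^'p^'n)) = c *\<^sub>R (A ** B)"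
  by (simp add: vec_eq_iff matrix_matrix_mult_def sum_distrib_left mult.left_commute)
lemma mm_add_rdistrib: "((A::real^'n::finite^'m) + B) ** (C::real^'p^'n) = A ** C + B ** C"
  by (simp add: vec_eq_iff matrix_matrix_mult_def sum.distrib distrib_right)
lemma mm_diff_rdistrib: "((A::real^'n::finite^'m) - B) ** (C::real^'p^'n) = A ** C - B ** C"
  by (simp add: vec_eq_iff matrix_matrix_mult_def sum_subtractf left_diff_distrib)
lemma mm_diff_ldistrib: "(C::real^'n::finite^'m) ** ((A::real^'p^'n) - B) = C ** A - C ** B"
  by (simp add: vec_eq_iff matrix_matrix_mult_def sum_subtractf right_diff_distrib)

lemma bb_mm: "bounded_bilinear ((**) :: real^'n::finite^'n \<Rightarrow> real^'n^'n \<Rightarrow> real^'n^'n)"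
  unfolding bilinear_conv_bounded_bilinear[symmetric] bilinear_def
  by (auto intro!: linearI simp: matrix_add_ldistrib mm_add_rdistrib mm_scaleR_left mm_scaleR_right)

lemma hadamard_nth[simp]: "hadamard A B $ i $ j = A $ i $ j * B $ i $ j"
  by (simp add: hadamard_def)

lemma hadamard_zero_right[simp]: "hadamard E 0 = 0"
  by (simp add: vec_eq_iff)

lemma bl_hadamard: "bounded_linear (hadamard (E::real^'n::finite^'m::finite))"
  unfolding linear_conv_bounded_linear[symmetric]
  by (auto intro!: linearI simp: vec_eq_iff algebra_simps)

lemma bl_transpose: "bounded_linear (transpose :: real^'n::finite^'m::finite \<Rightarrow> _)"
  unfolding linear_conv_bounded_linear[symmetric]
  by (auto intro!: linearI simp: vec_eq_iff transpose_def)

lemma if01_mult: "(if P then (1::real) else 0) * x = (if P then x else 0)"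
  "x * (if P then (1::real) else 0) = (if P then x else 0)" by auto

lemma mult_if0: "(x::real) * (if P then y else 0) = (if P then x * y else 0)" by auto
lemma sum_if0: "(\<Sum>j\<in>S. if P then f j else (0::real)) = (if P then sum f S else 0)" by auto

lemma surjL:
  fixes A :: "real^'n::finite^'n"
  assumes "nSSP A"
  defines "E \<equiv> ((\<chi> i j. if A$i$j = 0 then 0 else 1) :: real^'n^'n)"
  shows "surj (\<lambda>(X,Y). X ** A - A ** X + hadamard E Y)" (is "surj ?L")
proof (rule ccontr)
  assume ns: "\<not> surj ?L"
  have linL: "linear ?L"
    by (auto intro!: linearI simp: matrix_add_ldistrib mm_add_rdistrib mm_scaleR_left mm_scaleR_right
       vec_eq_iff algebra_simps)
  have sub: "subspace (range ?L)"
    by (rule linear_subspace_image[OF linL subspace_UNIV])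
  have "span (range ?L) \<subset> span UNIV"
  proof -
    have "span (range ?L) = range ?L" using sub by (simp add: span_eq_iff)
    then show ?thesis using ns unfolding psubset_eq span_UNIV by (metis subset_UNIV)
  qed
  then obtain Z where Z: "Z \<noteq> 0" "\<And>y. y \<in> span (range ?L) \<Longrightarrow> orthogonal Z y"
    by (rule orthogonal_to_subspace_exists_gen) auto
  have orth: "inner Z (?L (X,Y)) = 0" for X Y
  proof -
    have "?L (X,Y) \<in> span (range ?L)" by (rule span_base) (rule rangeI)
    then show ?thesis using Z(2) by (simp add: orthogonal_def)
  qed
  have "hadamard A Z = 0"
  proof -
    have "inner Z (?L (0,Z)) = (\<Sum>i\<in>UNIV. \<Sum>j\<in>UNIV. E$i$j * (Z$i$j)^2)"
      by (simp add: inner_vec_def power2_eq_square mult_ac)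
    then have s0: "(\<Sum>i\<in>UNIV. \<Sum>j\<in>UNIV. E$i$j * (Z$i$j)^2) = 0" using orth[of 0 Z] by simp
    have nn: "\<And>i j. E$i$j * (Z$i$j)^2 \<ge> 0" by (simp add: E_def)
    have "\<forall>i. (\<Sum>j\<in>UNIV. E$i$j * (Z$i$j)^2) = 0"
      using s0 by (subst (asm) sum_nonneg_eq_0_iff) (auto intro: sum_nonneg nn)
    then have "\<forall>i j. E$i$j * (Z$i$j)^2 = 0"
      by (subst (asm) sum_nonneg_eq_0_iff) (auto intro: nn)
    then show ?thesis by (auto simp: vec_eq_iff E_def split: if_splits)
  qed
  moreover have "A ** transpose Z - transpose Z ** A = 0"
  proof -
    have "(A ** transpose Z - transpose Z ** A) $ b $ a = 0" for a b
    proof -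
      define X :: "real^'n^'n" where "X = (\<chi> i j. if i = a \<and> j = b then 1 else 0)"
      have e1: "(X ** A) $ i $ j = (if i = a then A $ b $ j else 0)" for i j
        by (cases "i = a") (simp_all add: X_def matrix_matrix_mult_def if01_mult)
      have e2: "(A ** X) $ i $ j = (if j = b then A $ i $ a else 0)" for i j
        by (cases "i = a") (simp_all add: X_def matrix_matrix_mult_def if01_mult)
      have "inner Z (?L (X,0)) = (\<Sum>i\<in>UNIV. \<Sum>j\<in>UNIV. Z$i$j * ((if i = a then A $ b $ j else 0) - (if j = b then A $ i $ a else 0)))"
        by (simp add: inner_vec_def e1 e2)
      also have "\<dots> = (\<Sum>j\<in>UNIV. Z$a$j * A$b$j) - (\<Sum>i\<in>UNIV. Z$i$b * A$i$a)"
      proof -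
        have s1: "(\<Sum>i\<in>UNIV. \<Sum>j\<in>UNIV. Z$i$j * (if i = a then A $ b $ j else 0)) = (\<Sum>j\<in>UNIV. Z$a$j * A$b$j)"
          by (simp only: mult_if0 sum_if0 sum.delta) simp
        have s2: "(\<Sum>i\<in>UNIV. \<Sum>j\<in>UNIV. Z$i$j * (if j = b then A $ i $ a else 0)) = (\<Sum>i\<in>UNIV. Z$i$b * A$i$a)"
          by (simp only: mult_if0 sum.delta) simp
        show ?thesis unfolding right_diff_distrib sum_subtractf s1 s2 ..
      qed
      also have "\<dots> = (A ** transpose Z - transpose Z ** A) $ b $ a"
        by (simp add: matrix_matrix_mult_def transpose_def mult_ac)
      finally show ?thesis using orth[of X 0] by simp
    qed
    then show ?thesis by (simp add: vec_eq_iff)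
  qed
  ultimately have "Z = 0" using assms(1) unfolding nSSP_def by blast
  with Z show False by simp
qed


lemma linL: "linear (\<lambda>(X,Y). X ** (A::real^'n::finite^'n) - A ** X + hadamard E Y)"
  by (auto intro!: linearI simp: matrix_add_ldistrib mm_add_rdistrib mm_scaleR_left mm_scaleR_right
       vec_eq_iff algebra_simps)

lemma transpose_scaleR: "transpose ((c::real) *\<^sub>R (X::real^'n::finite^'m::finite)) = c *\<^sub>R transpose X"
  by (simp add: vec_eq_iff transpose_def)

lemma openN:
  fixes A :: "real^'n::finite^'n"
  shows "open {B::real^'n^'n. \<forall>X. norm X = 1 \<longrightarrow> \<not> (hadamard A X = 0 \<and> B ** transpose X - transpose X ** B = 0)}"
    (is "open ?N")
proof -
  define T where "T = {p::(real^'n^'n) \<times> (real^'n^'n). hadamard A (fst p) = 0 \<and> snd p ** transpose (fst p) - transpose (fst p) ** snd p = 0}"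
  have cT: "closed T"
    unfolding T_def
    by (intro closed_Collect_conj closed_Collect_eq continuous_intros
         bounded_linear.continuous_on[OF bl_hadamard] bounded_bilinear.continuous_on[OF bb_mm]
         bounded_linear.continuous_on[OF bl_transpose])
  have "closed {y. \<exists>x. x \<in> sphere 0 1 \<and> (x, y) \<in> T}"
    using closed_compact_projection[OF compact_sphere[of 0 1] cT] by simp
  moreover have "- ?N = {y. \<exists>x. x \<in> sphere 0 1 \<and> (x, y) \<in> T}"
    unfolding T_def by (simp add: set_eq_iff)
  ultimately have "closed (- ?N)" by simp
  then show ?thesis by (simp add: closed_Compl open_closed)
qed

lemma matrix_inv_eq:
  fixes S W :: "real^'n::finite^'n"
  assumes "S ** W = mat 1" "W ** S = mat 1"
  shows "matrix_inv S = W"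
proof -
  have "S ** matrix_inv S = mat 1 \<and> matrix_inv S ** S = mat 1"
    unfolding matrix_inv_def by (rule someI[of _ W]) (use assms in auto)
  then have "W = W ** (S ** matrix_inv S)" by simp
  also have "\<dots> = matrix_inv S" by (simp add: matrix_mul_assoc assms(2))
  finally show ?thesis by simp
qed


theorem theorem5p2:
  fixes P :: "'n::finite sign_pattern" and A :: "real^'n^'n"
  assumes "A \<in> qual_class P" and "nSSP A"
  shows "\<exists>\<epsilon>>0. \<forall>M :: real^'n^'n. norm (M - A) < \<epsilon> \<longrightarrow>
           (\<exists>A' \<in> qual_class P. similar_matrix A' M \<and> nSSP A')"
proof -
  define I :: "real^'n^'n" where "I = mat 1"
  define E :: "real^'n^'n" where "E = (\<chi> i j. if A$i$j = 0 then 0 else 1)"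
  define L where "L = (\<lambda>(X,Y). X ** A - A ** X + hadamard E Y)"
  have lL: "linear L" unfolding L_def by (rule linL)
  have sL: "surj L" unfolding L_def E_def by (rule surjL[OF assms(2)])
  obtain g where lg: "linear g" and Lg: "L \<circ> g = id"
    using real_vector.linear_surjective_right_inverse[OF lL sL] by blast
  have Lg': "fst (g v) ** A - A ** fst (g v) + hadamard E (snd (g v)) = v" for v
    using fun_cong[OF Lg, of v] by (simp add: L_def split_beta)
  define N where "N = {B::real^'n^'n. \<forall>X. norm X = 1 \<longrightarrow> \<not> (hadamard A X = 0 \<and> B ** transpose X - transpose X ** B = 0)}"
  have oN: "open N" unfolding N_def by (rule openN)
  define K where "K = {(i,j). A$i$j \<noteq> 0}"
  define \<delta> where "\<delta> = (if K = {} then 1 else Min ((\<lambda>(i,j). \<bar>A$i$j\<bar>) ` K))"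
  have dpos: "\<delta> > 0"
    unfolding \<delta>_def K_def by (auto simp: finite_image_iff)
  have dle: "\<delta> \<le> \<bar>A$i$j\<bar>" if "A$i$j \<noteq> 0" for i j
  proof -
    have "(i,j) \<in> K" using that by (simp add: K_def)
    then show ?thesis unfolding \<delta>_def by (auto intro!: Min_le)
  qed
  define F :: "(real^'n^'n) \<times> (real^'n^'n) \<times> (real^'n^'n) \<Rightarrow> (real^'n^'n) \<times> (real^'n^'n)"
    where "F = (\<lambda>x. ((I + fst x) ** (I + fst (snd x)), ((I + fst x) ** (A + hadamard E (snd (snd x)))) ** (I + fst (snd x))))"
  define F' :: "(real^'n^'n) \<times> (real^'n^'n) \<times> (real^'n^'n) \<Rightarrow> (real^'n^'n) \<times> (real^'n^'n)"
    where "F' = (\<lambda>h. (fst h + fst (snd h), fst h ** A + hadamard E (snd (snd h)) + A ** fst (snd h)))"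
  define G :: "(real^'n^'n) \<times> (real^'n^'n) \<Rightarrow> (real^'n^'n) \<times> (real^'n^'n) \<times> (real^'n^'n)"
    where "G = (\<lambda>p. (fst (g (snd p - A ** fst p)), fst p - fst (g (snd p - A ** fst p)), snd (g (snd p - A ** fst p))))"
  have derF: "(F has_derivative F') (at 0)"
    unfolding F_def
    apply (rule has_derivative_eq_rhs)
     apply (rule has_derivative_Pair bounded_bilinear.FDERIV[OF bb_mm] has_derivative_add has_derivative_const
         has_derivative_fst has_derivative_snd has_derivative_ident bounded_linear.has_derivative[OF bl_hadamard])+
    apply (simp add: F'_def I_def fun_eq_iff add.commute)
    done
  have difF: "F differentiable at x" for x
    unfolding F_def differentiable_def
    apply (rule exI)
    apply (rule has_derivative_Pair bounded_bilinear.FDERIV[OF bb_mm] has_derivative_add has_derivative_const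
         has_derivative_fst has_derivative_snd has_derivative_ident bounded_linear.has_derivative[OF bl_hadamard])+
    done
  have contF: "continuous_on UNIV F"
    by (rule differentiable_imp_continuous_on) (simp add: differentiable_on_def difF differentiable_at_withinI)
  have linG: "linear G"
  proof (rule linearI)
    fix p q :: "(real^'n^'n) \<times> (real^'n^'n)"
    have eq: "snd (p + q) - A ** fst (p + q) = (snd p - A ** fst p) + (snd q - A ** fst q)"
      by (simp add: matrix_add_ldistrib)
    have "G (p + q) = (fst (g ((snd p - A ** fst p) + (snd q - A ** fst q))), fst (p + q) - fst (g ((snd p - A ** fst p) + (snd q - A ** fst q))), snd (g ((snd p - A ** fst p) + (snd q - A ** fst q))))"
      unfolding G_def eq by (rule refl)
    then show "G (p + q) = G p + G q"
      unfolding real_vector.linear_add[OF lg] by (simp add: G_def prod_eq_iff)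
  next
    fix c :: real and p :: "(real^'n^'n) \<times> (real^'n^'n)"
    have eq: "snd (c *\<^sub>R p) - A ** fst (c *\<^sub>R p) = c *\<^sub>R (snd p - A ** fst p)"
      by (simp add: mm_scaleR_right scaleR_diff_right)
    have "G (c *\<^sub>R p) = (fst (g (c *\<^sub>R (snd p - A ** fst p))), fst (c *\<^sub>R p) - fst (g (c *\<^sub>R (snd p - A ** fst p))), snd (g (c *\<^sub>R (snd p - A ** fst p))))"
      unfolding G_def eq by (rule refl)
    then show "G (c *\<^sub>R p) = c *\<^sub>R G p"
      unfolding linear_cmul[OF lg] by (simp add: G_def prod_eq_iff scaleR_diff_right)
  qed
  have blG: "bounded_linear G" using linG by (simp add: linear_conv_bounded_linear)
  have FG: "F' \<circ> G = id"
  proof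
    fix p :: "(real^'n^'n) \<times> (real^'n^'n)"
    let ?v = "snd p - A ** fst p"
    have "fst (g ?v) ** A + hadamard E (snd (g ?v)) + A ** (fst p - fst (g ?v)) = snd p"
      using Lg'[of ?v] by (simp add: mm_diff_ldistrib algebra_simps)
    then show "(F' \<circ> G) p = id p"
      by (simp add: F'_def G_def)
  qed
  define S where "S = {x :: (real^'n^'n) \<times> (real^'n^'n) \<times> (real^'n^'n). norm (snd (snd x)) < \<delta> \<and> A + hadamard E (snd (snd x)) \<in> N}"
  have oS: "open S"
  proof -
    have "S = {x. norm (snd (snd x)) < \<delta>} \<inter> ((\<lambda>x. A + hadamard E (snd (snd x))) -` N)"
      by (auto simp: S_def)
    moreover have "open {x :: (real^'n^'n) \<times> (real^'n^'n) \<times> (real^'n^'n). norm (snd (snd x)) < \<delta>}"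
      by (intro open_Collect_less continuous_intros)
    moreover have "open ((\<lambda>x :: (real^'n^'n) \<times> (real^'n^'n) \<times> (real^'n^'n). A + hadamard E (snd (snd x))) -` N)"
      by (rule open_vimage[OF oN], rule continuous_on_add[OF continuous_on_const
            bounded_linear.continuous_on[OF bl_hadamard continuous_on_snd[OF continuous_on_snd[OF continuous_on_id]]]])
    ultimately show ?thesis by (simp add: open_Int)
  qed
  have AN: "A \<in> N"
  proof -
    have "X = 0" if "hadamard A X = 0 \<and> A ** transpose X - transpose X ** A = 0" for X
      using assms(2) that unfolding nSSP_def by blast
    then show ?thesis unfolding N_def by force
  qed
  have hE0: "hadamard E 0 = 0" by (simp add: vec_eq_iff)
  have S0: "0 \<in> S" using dpos AN by (simp add: S_def hE0)
  have F0: "F 0 = (I, A)" by (simp add: F_def hE0 I_def)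
  have "F 0 \<in> interior (F ` S)"
    by (rule sussmann_open_mapping[OF oS contF[THEN continuous_on_subset] S0 derF blG FG order_refl]) (auto simp: interior_open[OF oS] S0)
  then have "\<exists>e>0. ball (I, A) e \<subseteq> F ` S"
    unfolding F0 by (simp only: mem_interior)
  then obtain e where e: "e > 0" "ball (I, A) e \<subseteq> F ` S"
    by (elim exE conjE) (rule that)
  show ?thesis
  proof (rule exI[of _ e], intro conjI allI impI)
    show "e > 0" by (rule e(1))
  next
    fix M :: "real^'n^'n"
    assume M: "norm (M - A) < e"
    have "dist (I, A) (I, M) = dist A M" by (simp add: dist_Pair_Pair)
    also have "\<dots> = norm (M - A)" by (simp add: dist_norm norm_minus_commute)
    finally have "(I, M) \<in> ball (I, A) e" using M by simp
    then have "(I, M) \<in> F ` S" by (rule subsetD[OF e(2)])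
    then obtain x where xS: "x \<in> S" and Fx: "F x = (I, M)" by (metis imageE)
    define X where "X = fst x"
    define Z where "Z = fst (snd x)"
    define Y where "Y = snd (snd x)"
    define A' where "A' = A + hadamard E Y"
    have XZ: "(I + X) ** (I + Z) = I" and MA: "((I + X) ** A') ** (I + Z) = M"
      using Fx by (simp_all add: F_def X_def Z_def Y_def A'_def)
    have ZX: "(I + Z) ** (I + X) = I"
      using XZ matrix_left_right_inverse unfolding I_def by blast
    have Yd: "norm Y < \<delta>" and A'N: "A' \<in> N" using xS by (simp_all add: S_def Y_def A'_def)
    have A'e: "A' $ i $ j = (if A$i$j = 0 then 0 else A$i$j + Y$i$j)" for i j
      by (simp add: A'_def E_def)
    have Ysmall: "\<bar>Y$i$j\<bar> < \<bar>A$i$j\<bar>" if "A$i$j \<noteq> 0" for i j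
    proof -
      have "\<bar>Y$i$j\<bar> \<le> norm (Y$i)" by (rule component_le_norm_cart)
      also have "\<dots> \<le> norm Y" by (rule Finite_Cartesian_Product.norm_nth_le)
      finally show ?thesis using Yd dle[OF that] by linarith
    qed
    have A'Q: "A' \<in> qual_class P"
      unfolding qual_class_def
    proof (intro CollectI allI)
      fix i j
      have hs: "has_sign (A$i$j) (P i j)" using assms(1) by (simp add: qual_class_def)
      show "has_sign (A' $ i $ j) (P i j)"
      proof (cases "A$i$j = 0")
        case True then show ?thesis using hs by (simp add: A'e)
      next
        case False
        then have "\<bar>Y$i$j\<bar> < \<bar>A$i$j\<bar>" by (rule Ysmall)
        then show ?thesis using hs False
          by (cases "P i j") (auto simp: has_sign_def A'e abs_less_iff split: if_splits)
      qed
    qed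
    have A'S: "nSSP A'"
      unfolding nSSP_def
    proof (intro allI impI)
      fix W :: "real^'n^'n"
      assume W: "hadamard A' W = 0 \<and> A' ** transpose W - transpose W ** A' = 0"
      show "W = 0"
      proof (rule ccontr)
        assume W0: "W \<noteq> 0"
        define W1 where "W1 = (1 / norm W) *\<^sub>R W"
        have n1: "norm W1 = 1" using W0 by (simp add: W1_def)
        have hA: "hadamard A W = 0"
        proof -
          have "A$i$j * W$i$j = 0" for i j
          proof (cases "A$i$j = 0")
            case False
            then have "A' $ i $ j \<noteq> 0" using Ysmall[OF False] by (auto simp: A'e)
            moreover have "A' $ i $ j * W $ i $ j = 0" using W by (simp add: vec_eq_iff)
            ultimately show ?thesis by simp
          qed simp
          then show ?thesis by (simp add: vec_eq_iff)
        qed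
        have "hadamard A W1 = 0" using hA by (simp add: W1_def vec_eq_iff)
        moreover have "A' ** transpose W1 - transpose W1 ** A' = 0"
          using W by (simp add: W1_def transpose_scaleR mm_scaleR_left mm_scaleR_right scaleR_diff_right[symmetric])
        ultimately show False using A'N n1 unfolding N_def by blast
      qed
    qed
    have sim: "similar_matrix A' M"
      unfolding similar_matrix_def
    proof (intro exI conjI)
      show "invertible (I + X)" unfolding invertible_def I_def[symmetric] using XZ ZX by blast
      have "matrix_inv (I + X) = I + Z" using XZ ZX unfolding I_def by (rule matrix_inv_eq)
      moreover have "(I + Z) ** M ** (I + X) = A'"
      proof -
        have "(I + Z) ** M ** (I + X) = ((I + Z) ** (I + X)) ** A' ** ((I + Z) ** (I + X))"
          unfolding MA[symmetric] by (simp add: matrix_mul_assoc)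
        then show ?thesis unfolding ZX by (simp add: I_def)
      qed
      ultimately show "A' = matrix_inv (I + X) ** M ** (I + X)" by simp
    qed
    show "\<exists>A' \<in> qual_class P. similar_matrix A' M \<and> nSSP A'"
      using A'Q sim A'S by blast
  qed
qed

end
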